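(* Let $V$ be a finite set of $n$ agents in the setting described in the context (binary state $S$, private signals $W_u$ that are i.i.d.\ with law $\mu_S$ conditionally on $S$, information $\sigma$-algebras $\mathcal{F}_u$ with $\sigma(W_u)\subseteq\mathcal{F}_u\subseteq\sigma(W_v: v\in V)$). Assume common knowledge of beliefs: for all $u,w\in V$, $X_u=\mathbb{P}(S=1\mid\mathcal{F}_u)$ is almost surely $\mathcal{F}_w$-measurable, and let $X$ be a random variable such that almost surely $X=X_u$ for all $u\in V$. Then almost surely $$X=\mathbb{P}(S=1\mid W_1,\ldots,W_n).$$
   Context: The state of the world $S$ is uniform on $\{0,1\}$. $\mu_0\neq\mu_1$ are probability measures on a measurable space $(\Omega,\mathcal{O})$, mutually absolutely continuous, and $z(\omega)=\log\frac{d\mu_1}{d\mu_0}(\omega)$ is the log-likelihood ratio. $V$ is a finite set of $n$ agents; agent $u$ has a private signal $W_u\in\Omega$, and conditionally on $S$ the signals $(W_u)_{u\in V}$ are independent, each with law $\mu_S$. For each agent $u$, $\mathcal{F}_u$ is a $\sigma$-algebra (what $u$ knows) with $\sigma(W_u)\subseteq\mathcal{F}_u\subseteq\sigma(W_v:v\in V)$. The posterior belief of $u$ is $X_u=\mathbb{P}(S=1\mid\mathcal{F}_u)$. *)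

theory Defs
  imports "HOL-Probability.Probability"
begin

definition sigma_signals :: "'a measure \<Rightarrow> 'v set \<Rightarrow> ('v \<Rightarrow> 'a \<Rightarrow> 'b) \<Rightarrow> 'b measure \<Rightarrow> 'a set set" where
  "sigma_signals M V W N = sigma_sets (space M) (\<Union>v\<in>V. {W v -` A \<inter> space M | A. A \<in> sets N})"

definition posterior :: "'a measure \<Rightarrow> 'a measure \<Rightarrow> ('a \<Rightarrow> nat) \<Rightarrow> 'a \<Rightarrow> real" where
  "posterior M G S = real_cond_exp M G (\<lambda>x. if S x = 1 then 1 else 0)"

end

theory Submission
  imports Defs
begin



lemma core:
  fixes M :: "'a measure" and V :: "'v set" and Z :: "'a \<Rightarrow> real" and a :: "'v \<Rightarrow> 'a \<Rightarrow> real"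
  assumes V: "finite V"
    and am[measurable]: "\<And>u. u\<in>V \<Longrightarrow> a u \<in> borel_measurable M"
    and intZ: "integrable M Z"
    and H1: "\<And>u \<phi> B. u\<in>V \<Longrightarrow> \<phi> \<in> borel_measurable borel \<Longrightarrow> (\<And>t. \<bar>\<phi> t\<bar> \<le> B)
              \<Longrightarrow> (\<integral>x. Z x * \<phi> (a u x) \<partial>M) = 0"
    and H2: "\<And>u. u\<in>V \<Longrightarrow> integrable M (\<lambda>x. Z x * min (a u x) 0)"
    and H3: "AE x in M. (Z x > 0 \<longrightarrow> (\<Sum>u\<in>V. a u x) > 0) \<and> (Z x < 0 \<longrightarrow> (\<Sum>u\<in>V. a u x) < 0)"
  shows "AE x in M. Z x = 0"
proof -
  have Zm[measurable]: "Z \<in> borel_measurable M" using intZ by auto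
  have bint: "integrable M (\<lambda>x. Z x * \<phi> (a u x))"
    if "u\<in>V" "\<phi> \<in> borel_measurable borel" "\<And>t. \<bar>\<phi> t\<bar> \<le> B" for u \<phi> B
  proof (rule Bochner_Integration.integrable_bound[where f="\<lambda>x. \<bar>B\<bar> * \<bar>Z x\<bar>"])
    show "integrable M (\<lambda>x. \<bar>B\<bar> * \<bar>Z x\<bar>)" using intZ by auto
    show "(\<lambda>x. Z x * \<phi> (a u x)) \<in> borel_measurable M" using that by measurable
    show "AE x in M. norm (Z x * \<phi> (a u x)) \<le> norm (\<bar>B\<bar> * \<bar>Z x\<bar>)"
    proof (intro AE_I2)
      fix x have pb: "\<bar>\<phi> (a u x)\<bar> \<le> \<bar>B\<bar>" using that(3)[of "a u x"] by linarith
      show "norm (Z x * \<phi> (a u x)) \<le> norm (\<bar>B\<bar> * \<bar>Z x\<bar>)"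
        using mult_left_mono[OF pb abs_ge_zero[of "Z x"]] by (simp add: abs_mult mult.commute)
    qed
  qed
  have step1: "(\<integral>x. Z x * min (a u x) 0 \<partial>M) = 0" if u: "u\<in>V" for u
  proof -
    let ?s = "\<lambda>(N::nat) x. Z x * max (min (a u x) 0) (- real N)"
    have lim: "(\<lambda>N. integral\<^sup>L M (?s N)) \<longlonglongrightarrow> (\<integral>x. Z x * min (a u x) 0 \<partial>M)"
    proof (rule integral_dominated_convergence[where w="\<lambda>x. \<bar>Z x * min (a u x) 0\<bar>"])
      show "(\<lambda>x. Z x * min (a u x) 0) \<in> borel_measurable M" using u by measurable
      show "?s N \<in> borel_measurable M" for N using u by measurable
      show "integrable M (\<lambda>x. \<bar>Z x * min (a u x) 0\<bar>)" using H2[OF u] by auto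
      show "AE x in M. (\<lambda>N. ?s N x) \<longlonglongrightarrow> Z x * min (a u x) 0"
      proof (intro AE_I2)
        fix x
        obtain N0 :: nat where "real N0 \<ge> - a u x" using real_arch_simple by blast
        then have "\<forall>N\<ge>N0. ?s N x = Z x * min (a u x) 0"
          by (auto simp: max_def min_def)
        then show "(\<lambda>N. ?s N x) \<longlonglongrightarrow> Z x * min (a u x) 0"
          by (intro tendsto_eventually) (auto simp: eventually_sequentially)
      qed
      show "AE x in M. norm (?s N x) \<le> \<bar>Z x * min (a u x) 0\<bar>" for N
      proof (intro AE_I2)
        fix x
        have "\<bar>max (min (a u x) 0) (- real N)\<bar> \<le> \<bar>min (a u x) 0\<bar>" by (auto simp: max_def min_def)
        from mult_left_mono[OF this abs_ge_zero[of "Z x"]]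
        show "norm (?s N x) \<le> \<bar>Z x * min (a u x) 0\<bar>" by (simp add: abs_mult)
      qed
    qed
    have "integral\<^sup>L M (?s N) = 0" for N
      by (rule H1[OF u, where B="real N"]) (auto simp: max_def min_def)
    with lim show ?thesis by (simp add: LIMSEQ_const_iff)
  qed
  define k where "k n x = (\<Sum>u\<in>V. min (max (a u x) 0) (real n)) + (\<Sum>u\<in>V. min (a u x) 0)" for n x
  define C where "C x = (\<Sum>u\<in>V. \<bar>Z x * min (a u x) 0\<bar>)" for x
  have Cint: "integrable M C" unfolding C_def using H2 by (auto intro!: integrable_sum)
  have Cm[measurable]: "C \<in> borel_measurable M" using Cint by auto
  have km[measurable]: "k n \<in> borel_measurable M" for n unfolding k_def by measurable
  have intk: "integrable M (\<lambda>x. Z x * k n x)" and intk0: "(\<integral>x. Z x * k n x \<partial>M) = 0" for n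
  proof -
    have e: "Z x * k n x = (\<Sum>u\<in>V. Z x * min (max (a u x) 0) (real n)) + (\<Sum>u\<in>V. Z x * min (a u x) 0)" for x
      unfolding k_def by (simp add: distrib_left sum_distrib_left)
    have i1: "integrable M (\<lambda>x. Z x * min (max (a u x) 0) (real n))" if "u\<in>V" for u
      by (rule bint[OF that, where B="real n"]) auto
    have z1: "(\<integral>x. Z x * min (max (a u x) 0) (real n) \<partial>M) = 0" if "u\<in>V" for u
      by (rule H1[OF that, where B="real n"]) auto
    show "integrable M (\<lambda>x. Z x * k n x)" unfolding e using i1 H2
      by (intro Bochner_Integration.integrable_add integrable_sum) auto
    have "(\<integral>x. Z x * k n x \<partial>M) = (\<Sum>u\<in>V. \<integral>x. Z x * min (max (a u x) 0) (real n) \<partial>M)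
        + (\<Sum>u\<in>V. \<integral>x. Z x * min (a u x) 0 \<partial>M)"
      unfolding e using i1 H2
      by (subst Bochner_Integration.integral_add) (auto intro!: integrable_sum simp: integral_sum)
    also have "\<dots> = 0" using z1 step1 by simp
    finally show "(\<integral>x. Z x * k n x \<partial>M) = 0" .
  qed
  define D where "D x = (\<Sum>u\<in>V. a u x)" for x
  have Dm[measurable]: "D \<in> borel_measurable M" unfolding D_def by measurable
  define h where "h n x = Z x * k n x + C x" for n x
  have hm[measurable]: "h n \<in> borel_measurable M" for n unfolding h_def by measurable
  have kD: "k n x \<le> D x" for n x
    unfolding k_def D_def sum.distrib[symmetric]
    by (intro sum_mono) (auto simp: min_def max_def)
  have kneg: "k n x \<ge> (\<Sum>u\<in>V. min (a u x) 0)" for n x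
    unfolding k_def by (auto intro!: sum_nonneg)
  have Cge: "C x \<ge> - (Z x * (\<Sum>u\<in>V. min (a u x) 0))" if "Z x \<ge> 0" for x
  proof -
    have "- (Z x * (\<Sum>u\<in>V. min (a u x) 0)) = (\<Sum>u\<in>V. \<bar>Z x * min (a u x) 0\<bar>)"
      using that by (auto simp: sum_distrib_left sum_negf[symmetric] abs_mult intro!: sum.cong)
    then show ?thesis unfolding C_def by simp
  qed
  have Cnn: "C x \<ge> 0" for x unfolding C_def by (auto intro!: sum_nonneg)
  have hnn: "AE x in M. h n x \<ge> 0" for n
    using H3
  proof eventually_elim
    case (elim x)
    show ?case
    proof (cases "Z x \<ge> 0")
      case True
      then have "Z x * k n x \<ge> Z x * (\<Sum>u\<in>V. min (a u x) 0)" using kneg by (intro mult_left_mono) auto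
      then show ?thesis unfolding h_def using Cge[OF True] by linarith
    next
      case False
      then have "D x < 0" using elim unfolding D_def by auto
      then have "k n x < 0" using kD[of n x] by linarith
      then have "Z x * k n x \<ge> 0" using False by (simp add: mult_nonpos_nonpos)
      then show ?thesis unfolding h_def using Cnn[of x] by linarith
    qed
  qed
  have hint: "integrable M (h n)" for n unfolding h_def using intk Cint by auto
  have hI: "(\<integral>\<^sup>+x. ennreal (h n x) \<partial>M) = ennreal (integral\<^sup>L M C)" for n
    using nn_integral_eq_integral[OF hint hnn] intk0 unfolding h_def
    using intk Cint by simp
  have ev: "\<forall>\<^sub>F n in sequentially. k n x = D x" for x
  proof -
    obtain N0 :: nat where N0: "real N0 \<ge> (\<Sum>u\<in>V. \<bar>a u x\<bar>)" using real_arch_simple by blast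
    have "k n x = D x" if "n \<ge> N0" for n
    proof -
      have "min (max (a u x) 0) (real n) = max (a u x) 0" if "u\<in>V" for u
      proof -
        have "\<bar>a u x\<bar> \<le> (\<Sum>u\<in>V. \<bar>a u x\<bar>)" using that V by (intro member_le_sum) auto
        then show ?thesis using N0 \<open>n \<ge> N0\<close> by (auto simp: min_def max_def)
      qed
      then show ?thesis unfolding k_def D_def sum.distrib[symmetric]
        by (intro sum.cong) (auto simp: min_def max_def)
    qed
    then show ?thesis by (auto simp: eventually_sequentially)
  qed
  have liminf_eq: "liminf (\<lambda>n. ennreal (h n x)) = ennreal (Z x * D x + C x)" for x
  proof (rule lim_imp_Liminf)
    show "\<not> trivial_limit (sequentially :: nat filter)" by simp
    have "\<forall>\<^sub>F n in sequentially. ennreal (h n x) = ennreal (Z x * D x + C x)"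
      using ev[of x] by eventually_elim (simp add: h_def)
    then show "(\<lambda>n. ennreal (h n x)) \<longlonglongrightarrow> ennreal (Z x * D x + C x)"
      by (rule tendsto_eventually)
  qed
  have "(\<integral>\<^sup>+x. ennreal (Z x * D x + C x) \<partial>M) \<le> liminf (\<lambda>n. \<integral>\<^sup>+x. ennreal (h n x) \<partial>M)"
    using nn_integral_liminf[of "\<lambda>n x. ennreal (h n x)" M] by (simp add: liminf_eq)
  also have "\<dots> = ennreal (integral\<^sup>L M C)" by (simp add: hI Liminf_const)
  also have "\<dots> = (\<integral>\<^sup>+x. ennreal (C x) \<partial>M)"
    by (rule nn_integral_eq_integral[symmetric]) (use Cint Cnn in auto)
  finally have le: "(\<integral>\<^sup>+x. ennreal (Z x * D x + C x) \<partial>M) \<le> (\<integral>\<^sup>+x. ennreal (C x) \<partial>M)" .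
  have ZDnn: "AE x in M. Z x * D x \<ge> 0"
    using H3 by eventually_elim (auto simp: D_def zero_le_mult_iff not_less linorder_neq_iff
        intro: less_imp_le dest: )
  have "(\<integral>\<^sup>+x. ennreal (Z x * D x + C x) \<partial>M) = (\<integral>\<^sup>+x. ennreal (Z x * D x) + ennreal (C x) \<partial>M)"
    using ZDnn by (intro nn_integral_cong_AE) (auto simp: ennreal_plus Cnn)
  also have "\<dots> = (\<integral>\<^sup>+x. ennreal (Z x * D x) \<partial>M) + (\<integral>\<^sup>+x. ennreal (C x) \<partial>M)"
    by (rule nn_integral_add) auto
  finally have "(\<integral>\<^sup>+x. ennreal (Z x * D x) \<partial>M) + (\<integral>\<^sup>+x. ennreal (C x) \<partial>M) \<le> (\<integral>\<^sup>+x. ennreal (C x) \<partial>M)"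
    using le by simp
  moreover have "(\<integral>\<^sup>+x. ennreal (C x) \<partial>M) < \<infinity>"
    using nn_integral_eq_integral[OF Cint] Cnn by simp
  ultimately have "(\<integral>\<^sup>+x. ennreal (C x) \<partial>M) + (\<integral>\<^sup>+x. ennreal (Z x * D x) \<partial>M) \<le> (\<integral>\<^sup>+x. ennreal (C x) \<partial>M) + 0"
    "(\<integral>\<^sup>+x. ennreal (C x) \<partial>M) \<noteq> \<top>" by (simp_all add: add.commute)
  then have "(\<integral>\<^sup>+x. ennreal (Z x * D x) \<partial>M) \<le> 0"
    by (subst (asm) ennreal_add_left_cancel_le) auto
  then have "(\<integral>\<^sup>+x. ennreal (Z x * D x) \<partial>M) = 0" by simp
  then have "AE x in M. ennreal (Z x * D x) = 0"
    by (subst (asm) nn_integral_0_iff_AE) auto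
  then show ?thesis using H3 ZDnn
    by eventually_elim (auto simp: D_def linorder_neq_iff mult_pos_pos mult_neg_neg)
qed



lemma distr_Wv:
  fixes M :: "'a measure" and \<mu> :: "'b measure" and V :: "'v set"
  assumes M: "prob_space M" and mu: "prob_space \<mu>" and V: "finite V"
    and W: "\<forall>v\<in>V. W v \<in> measurable M \<mu>" and E: "E \<in> sets M"
    and law: "\<And>A. (\<forall>u\<in>V. A u \<in> sets \<mu>) \<Longrightarrow>
        measure M {x \<in> space M. x \<in> E \<and> (\<forall>u\<in>V. W u x \<in> A u)} = 1/2 * (\<Prod>u\<in>V. measure \<mu> (A u))"
  shows "distr (density M (\<lambda>x. 2 * indicator E x)) (PiM V (\<lambda>_. \<mu>)) (\<lambda>x. \<lambda>u\<in>V. W u x) = PiM V (\<lambda>_. \<mu>)"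
proof -
  interpret M: prob_space M by fact
  interpret mu: prob_space \<mu> by fact
  interpret P: product_sigma_finite "\<lambda>_. \<mu>" by standard
  have Wm[measurable]: "(\<lambda>x. \<lambda>u\<in>V. W u x) \<in> measurable M (PiM V (\<lambda>_. \<mu>))"
    using W by (intro measurable_restrict) auto
  show ?thesis
  proof (rule P.PiM_eqI[OF V])
    show "sets (distr (density M (\<lambda>x. 2 * indicator E x)) (Pi\<^sub>M V (\<lambda>_. \<mu>)) (\<lambda>x. \<lambda>u\<in>V. W u x)) = sets (Pi\<^sub>M V (\<lambda>_. \<mu>))"
      by simp
    fix A assume A: "\<And>i. i \<in> V \<Longrightarrow> A i \<in> sets \<mu>"
    have PA: "Pi\<^sub>E V A \<in> sets (Pi\<^sub>M V (\<lambda>_. \<mu>))" using A V by (intro sets_PiM_I_finite) auto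
    have pre: "(\<lambda>x. \<lambda>u\<in>V. W u x) -` Pi\<^sub>E V A \<inter> space M
       = {x \<in> space M. \<forall>u\<in>V. W u x \<in> A u}"
      by (auto simp: PiE_iff)
    have Bm: "{x \<in> space M. \<forall>u\<in>V. W u x \<in> A u} \<in> sets M"
      using measurable_sets[OF Wm PA] by (simp add: pre)
    have eq2: "{x \<in> space M. x \<in> E \<and> (\<forall>u\<in>V. W u x \<in> A u)} = E \<inter> {x \<in> space M. \<forall>u\<in>V. W u x \<in> A u}"
      using E sets.sets_into_space by auto
    have "emeasure (distr (density M (\<lambda>x. 2 * indicator E x)) (Pi\<^sub>M V (\<lambda>_. \<mu>)) (\<lambda>x. \<lambda>u\<in>V. W u x)) (Pi\<^sub>E V A)
        = emeasure (density M (\<lambda>x. 2 * indicator E x)) {x \<in> space M. \<forall>u\<in>V. W u x \<in> A u}"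
      using PA by (subst emeasure_distr) (simp_all add: pre)
    also have "\<dots> = (\<integral>\<^sup>+x. 2 * indicator (E \<inter> {x \<in> space M. \<forall>u\<in>V. W u x \<in> A u}) x \<partial>M)"
      using Bm E by (subst emeasure_density) (auto intro!: nn_integral_cong simp: indicator_def)
    also have "\<dots> = 2 * emeasure M (E \<inter> {x \<in> space M. \<forall>u\<in>V. W u x \<in> A u})"
      using Bm E by (subst nn_integral_cmult_indicator) auto
    also have "\<dots> = ennreal (2 * measure M {x \<in> space M. x \<in> E \<and> (\<forall>u\<in>V. W u x \<in> A u)})"
      unfolding eq2 using Bm E by (simp add: M.emeasure_eq_measure ennreal_mult)
    also have "\<dots> = ennreal (\<Prod>u\<in>V. measure \<mu> (A u))"
      using A by (subst law) auto
    also have "\<dots> = (\<Prod>u\<in>V. emeasure \<mu> (A u))"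
      by (simp add: mu.emeasure_eq_measure prod_ennreal)
    finally show "emeasure (distr (density M (\<lambda>x. 2 * indicator E x)) (Pi\<^sub>M V (\<lambda>_. \<mu>)) (\<lambda>x. \<lambda>u\<in>V. W u x)) (Pi\<^sub>E V A)
        = (\<Prod>u\<in>V. emeasure \<mu> (A u))" .
  qed
qed

lemma PiM_density:
  fixes \<mu>0 \<mu>1 :: "'b measure" and V :: "'v set" and \<rho> :: "'b \<Rightarrow> real"
  assumes mu0: "prob_space \<mu>0" and mu1: "prob_space \<mu>1" and V: "finite V"
    and rho[measurable]: "\<rho> \<in> borel_measurable \<mu>0" and dens: "\<mu>1 = density \<mu>0 (\<lambda>y. ennreal (\<rho> y))"
  shows "PiM V (\<lambda>_. \<mu>1) = density (PiM V (\<lambda>_. \<mu>0)) (\<lambda>x. \<Prod>u\<in>V. ennreal (\<rho> (x u)))"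
proof -
  interpret mu1: prob_space \<mu>1 by fact
  interpret mu0: prob_space \<mu>0 by fact
  interpret P1: product_sigma_finite "\<lambda>_. \<mu>1" by standard
  interpret P0: product_sigma_finite "\<lambda>_. \<mu>0" by standard
  have s: "sets \<mu>1 = sets \<mu>0" using dens by simp
  have sP: "sets (PiM V (\<lambda>_. \<mu>1)) = sets (PiM V (\<lambda>_. \<mu>0))"
    using s by (intro sets_PiM_cong) auto
  show ?thesis
  proof (rule P1.PiM_eqI[OF V, symmetric])
    show "sets (density (Pi\<^sub>M V (\<lambda>_. \<mu>0)) (\<lambda>x. \<Prod>u\<in>V. ennreal (\<rho> (x u)))) = sets (Pi\<^sub>M V (\<lambda>_. \<mu>1))"
      using sP by simp
    fix A assume A: "\<And>i. i \<in> V \<Longrightarrow> A i \<in> sets \<mu>1"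
    have A0: "A i \<in> sets \<mu>0" if "i\<in>V" for i using A[OF that] s by simp
    have PA: "Pi\<^sub>E V A \<in> sets (Pi\<^sub>M V (\<lambda>_. \<mu>0))" using A0 V by (intro sets_PiM_I_finite) auto
    have "emeasure (density (Pi\<^sub>M V (\<lambda>_. \<mu>0)) (\<lambda>x. \<Prod>u\<in>V. ennreal (\<rho> (x u)))) (Pi\<^sub>E V A)
        = (\<integral>\<^sup>+x. (\<Prod>u\<in>V. ennreal (\<rho> (x u))) * indicator (Pi\<^sub>E V A) x \<partial>Pi\<^sub>M V (\<lambda>_. \<mu>0))"
      using PA by (subst emeasure_density) auto
    also have "\<dots> = (\<integral>\<^sup>+x. (\<Prod>u\<in>V. ennreal (\<rho> (x u)) * indicator (A u) (x u)) \<partial>Pi\<^sub>M V (\<lambda>_. \<mu>0))"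
    proof (intro nn_integral_cong)
      fix x assume "x \<in> space (Pi\<^sub>M V (\<lambda>_. \<mu>0))"
      then have ext: "x \<in> extensional V" by (auto simp: space_PiM PiE_iff)
      have "indicator (Pi\<^sub>E V A) x = (\<Prod>u\<in>V. indicator (A u) (x u) :: ennreal)"
      proof (cases "x \<in> Pi\<^sub>E V A")
        case True then show ?thesis by (auto simp: indicator_def PiE_iff)
      next
        case False
        then obtain u where "u \<in> V" "x u \<notin> A u" using ext by (auto simp: PiE_iff)
        then have "(\<Prod>u\<in>V. indicator (A u) (x u) :: ennreal) = 0" by (intro prod_zero[OF V] bexI[of _ u]) auto
        then show ?thesis using False by simp
      qed
      then show "(\<Prod>u\<in>V. ennreal (\<rho> (x u))) * indicator (Pi\<^sub>E V A) x = (\<Prod>u\<in>V. ennreal (\<rho> (x u)) * indicator (A u) (x u))"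
        by (simp add: prod.distrib)
    qed
    also have "\<dots> = (\<Prod>u\<in>V. \<integral>\<^sup>+y. ennreal (\<rho> y) * indicator (A u) y \<partial>\<mu>0)"
      using A0 by (intro P0.product_nn_integral_prod[OF V]) auto
    also have "\<dots> = (\<Prod>u\<in>V. emeasure \<mu>1 (A u))"
      using A0 by (intro prod.cong refl) (simp add: dens emeasure_density)
    finally show "emeasure (density (Pi\<^sub>M V (\<lambda>_. \<mu>0)) (\<lambda>x. \<Prod>u\<in>V. ennreal (\<rho> (x u)))) (Pi\<^sub>E V A)
       = (\<Prod>u\<in>V. emeasure \<mu>1 (A u))" .
  qed
qed



lemma sigma_signals_eq:
  fixes M :: "'a measure" and \<mu> :: "'b measure" and V :: "'v set"
  assumes W: "\<forall>v\<in>V. W v \<in> measurable M \<mu>"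
  shows "sigma_signals M V W \<mu> = {(\<lambda>x. \<lambda>u\<in>V. W u x) -` B \<inter> space M | B. B \<in> sets (PiM V (\<lambda>_. \<mu>))}"
proof -
  let ?Wv = "\<lambda>x. \<lambda>u\<in>V. W u x"
  let ?\<Omega> = "\<Pi>\<^sub>E i\<in>V. space \<mu>"
  let ?G = "{{f\<in>?\<Omega>. f i \<in> A} | i A. i \<in> V \<and> A \<in> sets \<mu>}"
  have sp: "\<And>x v. x \<in> space M \<Longrightarrow> v \<in> V \<Longrightarrow> W v x \<in> space \<mu>" using W by (blast intro: measurable_space)
  have map: "?Wv \<in> space M \<rightarrow> ?\<Omega>" using W by (auto simp: measurable_def Pi_iff)
  have "{?Wv -` B \<inter> space M | B. B \<in> sets (PiM V (\<lambda>_. \<mu>))} = {?Wv -` B \<inter> space M | B. B \<in> sigma_sets ?\<Omega> ?G}"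
    by (simp add: sets_PiM_single)
  also have "\<dots> = sigma_sets (space M) {?Wv -` B \<inter> space M | B. B \<in> ?G}"
    by (rule sigma_sets_vimage_commute[OF map])
  also have "{?Wv -` B \<inter> space M | B. B \<in> ?G} = (\<Union>v\<in>V. {W v -` A \<inter> space M | A. A \<in> sets \<mu>})"
  proof (intro equalityI subsetI)
    fix X assume "X \<in> {?Wv -` B \<inter> space M | B. B \<in> ?G}"
    then obtain i A where iA: "i \<in> V" "A \<in> sets \<mu>" "X = ?Wv -` {f\<in>?\<Omega>. f i \<in> A} \<inter> space M" by blast
    then have "X = W i -` A \<inter> space M" using sp by (auto simp: PiE_iff)
    then show "X \<in> (\<Union>v\<in>V. {W v -` A \<inter> space M | A. A \<in> sets \<mu>})" using iA by blast
  next
    fix X assume "X \<in> (\<Union>v\<in>V. {W v -` A \<inter> space M | A. A \<in> sets \<mu>})"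
    then obtain i A where iA: "i \<in> V" "A \<in> sets \<mu>" "X = W i -` A \<inter> space M" by blast
    then have "X = ?Wv -` {f\<in>?\<Omega>. f i \<in> A} \<inter> space M" using sp by (auto simp: PiE_iff)
    then show "X \<in> {?Wv -` B \<inter> space M | B. B \<in> ?G}" using iA by blast
  qed
  finally show ?thesis unfolding sigma_signals_def by (rule sym)
qed




lemma helpA: "0 \<le> (t::real) \<Longrightarrow> t * (- min (ln t) 0) \<le> 1"
proof -
  assume t: "0 \<le> t"
  show ?thesis
  proof (cases "t = 0 \<or> t \<ge> 1")
    case True then show ?thesis by auto
  next
    case False
    then have t01: "0 < t" "t < 1" using t by auto
    have "ln (1/t) \<le> 1/t - 1" using t01 by (intro ln_le_minus_one) auto
    then have "- ln t \<le> 1/t - 1" using t01 by (simp add: ln_div)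
    then have "t * (- ln t) \<le> t * (1/t - 1)" using t01 by (intro mult_left_mono) auto
    also have "\<dots> = 1 - t" using t01 by (simp add: field_simps)
    finally show ?thesis using t01 by (simp add: min_def)
  qed
qed

lemma helpB: "0 \<le> (g::real) \<Longrightarrow> g \<le> 1 \<Longrightarrow> (1 - g) * max (ln g - ln (1 - g)) 0 \<le> 1"
proof -
  assume g: "0 \<le> g" "g \<le> 1"
  show ?thesis
  proof (cases "g = 1")
    case True then show ?thesis by simp
  next
    case False
    then have t: "0 < 1 - g" "1 - g \<le> 1" using g by auto
    have lng: "ln g \<le> 0" using g by (cases "g = 0") auto
    have lnt: "ln (1 - g) \<le> 0" using t by simp
    have "max (ln g - ln (1 - g)) 0 \<le> - min (ln (1 - g)) 0" using lng lnt by (auto simp: max_def min_def)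
    then have "(1 - g) * max (ln g - ln (1 - g)) 0 \<le> (1 - g) * (- min (ln (1 - g)) 0)"
      using t by (intro mult_left_mono) auto
    also have "\<dots> \<le> 1" using helpA[of "1 - g"] t by simp
    finally show ?thesis .
  qed
qed

lemma helpC:
  fixes g N L lm lp m :: real
  assumes "0\<le>g" "g\<le>1" "0\<le>N" "N\<le>1" "0\<le>L" "0\<le>lm" "0\<le>lp" "(1-g)*lp \<le> 1" "-m \<le> lm + lp" "m \<le> 0"
  shows "\<bar>N*(1-g)*(L*(1-g)-g) * m\<bar> \<le> N*L*lm + g*lm + N*L + 1"
proof -
  have a1: "\<bar>N*(1-g)*(L*(1-g)-g)\<bar> \<le> N*(1-g)*(L*(1-g)+g)"
  proof -
    have "\<bar>L*(1-g)-g\<bar> \<le> L*(1-g)+g" using assms by (simp add: abs_le_iff mult_nonneg_nonneg)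
    moreover have "0 \<le> N*(1-g)" using assms by simp
    ultimately show ?thesis using assms by (simp add: abs_mult mult_left_mono)
  qed
  have a2: "\<bar>m\<bar> \<le> lm + lp" using assms by simp
  have "\<bar>N*(1-g)*(L*(1-g)-g) * m\<bar> \<le> N*(1-g)*(L*(1-g)+g) * (lm + lp)"
    unfolding abs_mult[of _ m] using a1 a2 assms by (intro mult_mono) (auto simp: mult_nonneg_nonneg)
  also have "\<dots> = N*L*((1-g)*(1-g))*lm + N*((1-g)*g)*lm + N*L*(1-g)*((1-g)*lp) + N*g*((1-g)*lp)"
    by (simp add: algebra_simps)
  also have "\<dots> \<le> N*L*lm + g*lm + N*L + 1"
  proof -
    have b1: "N*L*((1-g)*(1-g))*lm \<le> N*L*lm"
    proof -
      have "(1-g)*(1-g) \<le> 1" using assms by (simp add: mult_le_one)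
      then have "((1-g)*(1-g))*lm \<le> 1*lm" using assms by (intro mult_right_mono) auto
      then have "(N*L)*(((1-g)*(1-g))*lm) \<le> (N*L)*(1*lm)" using assms by (intro mult_left_mono) auto
      then show ?thesis by (simp add: mult.assoc)
    qed
    have b2: "N*((1-g)*g)*lm \<le> g*lm"
    proof -
      have "(1-g)*g \<le> 1*g" using assms by (intro mult_right_mono) auto
      moreover have "N*((1-g)*g) \<le> 1*((1-g)*g)" using assms by (intro mult_right_mono) auto
      ultimately have "N*((1-g)*g) \<le> g" by simp
      then show ?thesis using assms by (intro mult_right_mono) auto
    qed
    have b3: "N*L*(1-g)*((1-g)*lp) \<le> N*L"
    proof -
      have "(1-g)*((1-g)*lp) \<le> 1*((1-g)*lp)" using assms by (intro mult_right_mono) auto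
      then have c: "(1-g)*((1-g)*lp) \<le> 1" using assms by simp
      have "(N*L)*((1-g)*((1-g)*lp)) \<le> (N*L)*1" using assms c by (intro mult_left_mono) auto
      then show ?thesis by (simp add: mult.assoc)
    qed
    have b4: "N*g*((1-g)*lp) \<le> 1"
    proof -
      have "N*g \<le> 1" using assms by (intro mult_le_one) auto
      moreover have "0 \<le> N*g" "0 \<le> (1-g)*lp" using assms by auto
      ultimately show ?thesis using mult_le_one[of "N*g" "(1-g)*lp"] assms(8) by blast
    qed
    show ?thesis using b1 b2 b3 b4 by linarith
  qed
  finally show ?thesis .
qed



lemma helpM: "\<bar>a::real\<bar> \<le> 1 \<Longrightarrow> \<bar>b\<bar> \<le> B \<Longrightarrow> \<bar>a * b\<bar> \<le> B"
proof -
  assume a: "\<bar>a\<bar> \<le> 1" and b: "\<bar>b\<bar> \<le> B"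
  have "\<bar>a\<bar> * \<bar>b\<bar> \<le> 1 * \<bar>b\<bar>" using a by (intro mult_right_mono) auto
  then show ?thesis using b by (simp add: abs_mult)
qed

lemma helpD:
  fixes L g :: real
  assumes L: "0 < L" and g: "0 < g" "g < 1"
  shows "(0 < (1-g)*(L*(1-g) - g) \<longleftrightarrow> 0 < ln L - (ln g - ln (1-g)))
       \<and> ((1-g)*(L*(1-g) - g) < 0 \<longleftrightarrow> ln L - (ln g - ln (1-g)) < 0)"
proof -
  define q where "q = g / (1 - g)"
  have q: "0 < q" unfolding q_def using g by simp
  have lq: "ln q = ln g - ln (1 - g)" unfolding q_def using g by (simp add: ln_div)
  have e: "(1-g)*(L*(1-g) - g) = (1-g)^2 * (L - q)"
    unfolding q_def using g by (simp add: field_simps power2_eq_square)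
  have p: "0 < (1-g)^2" using g by simp
  have s1: "0 < (1-g)*(L*(1-g) - g) \<longleftrightarrow> q < L" unfolding e using p by (simp add: zero_less_mult_iff)
  have s2: "(1-g)*(L*(1-g) - g) < 0 \<longleftrightarrow> L < q" unfolding e using p by (simp add: mult_less_0_iff)
  show ?thesis unfolding s1 s2 lq[symmetric] using L q by simp
qed




theorem theorem1:
  fixes M :: "'a measure" and S :: "'a \<Rightarrow> nat" and V :: "'v set"
    and W :: "'v \<Rightarrow> 'a \<Rightarrow> 'b" and \<mu>0 \<mu>1 :: "'b measure"
    and F :: "'v \<Rightarrow> 'a measure" and X :: "'a \<Rightarrow> real"
  assumes "prob_space M"
    and "prob_space \<mu>0" and "prob_space \<mu>1" and "sets \<mu>1 = sets \<mu>0" and "\<mu>0 \<noteq> \<mu>1"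
    and "absolutely_continuous \<mu>0 \<mu>1" and "absolutely_continuous \<mu>1 \<mu>0"
    and "finite V" and "V \<noteq> {}"
    and "S \<in> measurable M (count_space UNIV)" and "\<forall>x\<in>space M. S x \<in> {0, 1}"
    and "\<forall>v\<in>V. W v \<in> measurable M \<mu>0"
    and law: "\<And>s A. s \<in> {0, 1} \<Longrightarrow> (\<forall>u\<in>V. A u \<in> sets \<mu>0) \<Longrightarrow>
        measure M {x \<in> space M. S x = s \<and> (\<forall>u\<in>V. W u x \<in> A u)}
          = 1/2 * (\<Prod>u\<in>V. measure (if s = 0 then \<mu>0 else \<mu>1) (A u))"
    and "\<forall>u\<in>V. subalgebra M (F u)"
    and "\<forall>u\<in>V. sets (vimage_algebra (space M) (W u) \<mu>0) \<subseteq> sets (F u)"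
    and "\<forall>u\<in>V. sets (F u) \<subseteq> sigma_signals M V W \<mu>0"
    and common: "\<forall>u\<in>V. \<forall>w\<in>V. \<exists>g \<in> borel_measurable (F w).
        AE x in M. posterior M (F u) S x = g x"
    and "X \<in> borel_measurable M"
    and "AE x in M. \<forall>u\<in>V. X x = posterior M (F u) S x"
  shows "AE x in M. X x = posterior M (sigma (space M) (sigma_signals M V W \<mu>0)) S x"
  proof -
  note assms_all = assms
  interpret M: prob_space M by fact
  interpret mu0: prob_space \<mu>0 by fact
  interpret mu1: prob_space \<mu>1 by fact
  have s10: "sets \<mu>1 = sets \<mu>0" by fact
  have Sm[measurable]: "S \<in> measurable M (count_space UNIV)" by fact
  have Wm0[measurable]: "\<And>v. v \<in> V \<Longrightarrow> W v \<in> measurable M \<mu>0" using assms(12) by auto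
  have Wm1: "\<And>v. v \<in> V \<Longrightarrow> W v \<in> measurable M \<mu>1"
    using Wm0 s10 by (simp cong: measurable_cong_sets)
  have finV: "finite V" by fact
  define N1 where "N1 = (\<lambda>x. if S x = 1 then 1 else 0 :: real)"
  define N0 where "N0 = (\<lambda>x. if S x = 0 then 1 else 0 :: real)"
  have N1m[measurable]: "N1 \<in> borel_measurable M" unfolding N1_def by measurable
  have N0m[measurable]: "N0 \<in> borel_measurable M" unfolding N0_def by measurable
  have N01: "\<And>x. x \<in> space M \<Longrightarrow> N0 x = 1 - N1 x"
    using assms(11) unfolding N0_def N1_def by auto
  define E1 where "E1 = {x\<in>space M. S x = 1}"
  define E0 where "E0 = {x\<in>space M. S x = 0}"
  have E1m[measurable]: "E1 \<in> sets M" unfolding E1_def by measurable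
  have E0m[measurable]: "E0 \<in> sets M" unfolding E0_def by measurable
  define \<rho> where "\<rho> = (\<lambda>y. enn2real (RN_deriv \<mu>0 \<mu>1 y))"
  have rhom[measurable]: "\<rho> \<in> borel_measurable \<mu>0" unfolding \<rho>_def by measurable
  have rho_nn: "\<And>y. \<rho> y \<ge> 0" unfolding \<rho>_def by simp
  have dens: "\<mu>1 = density \<mu>0 (\<lambda>y. ennreal (\<rho> y))"
  proof -
    have "density \<mu>0 (RN_deriv \<mu>0 \<mu>1) = \<mu>1"
      using mu0.density_RN_deriv[OF assms(6) s10] .
    moreover have "AE y in \<mu>0. RN_deriv \<mu>0 \<mu>1 y \<noteq> \<infinity>"
      using mu0.RN_deriv_finite[OF _ assms(6) s10] mu1.sigma_finite_measure_axioms by blast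
    then have "density \<mu>0 (RN_deriv \<mu>0 \<mu>1) = density \<mu>0 (\<lambda>y. ennreal (\<rho> y))"
      by (intro density_cong) (auto simp: \<rho>_def ennreal_enn2real_if elim!: AE_mp)
    ultimately show ?thesis by simp
  qed
  define Wv where "Wv = (\<lambda>x. \<lambda>u\<in>V. W u x)"
  define \<Pi>0 where "\<Pi>0 = PiM V (\<lambda>_. \<mu>0)"
  define \<Pi>1 where "\<Pi>1 = PiM V (\<lambda>_. \<mu>1)"
  have sP: "sets \<Pi>1 = sets \<Pi>0" unfolding \<Pi>0_def \<Pi>1_def using s10 by (intro sets_PiM_cong) auto
  have Wvm[measurable]: "Wv \<in> measurable M \<Pi>0" unfolding Wv_def \<Pi>0_def
    using Wm0 by (intro measurable_restrict) auto
  have Wvm1: "Wv \<in> measurable M \<Pi>1" using Wvm sP by (simp cong: measurable_cong_sets)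
  have D0: "distr (density M (\<lambda>x. 2 * indicator E0 x)) \<Pi>0 Wv = \<Pi>0"
    unfolding \<Pi>0_def Wv_def
  proof (rule distr_Wv[OF assms(1) assms(2) finV assms(12) E0m])
    fix A assume "\<forall>u\<in>V. A u \<in> sets \<mu>0"
    then show "measure M {x \<in> space M. x \<in> E0 \<and> (\<forall>u\<in>V. W u x \<in> A u)} = 1 / 2 * (\<Prod>u\<in>V. measure \<mu>0 (A u))"
      using law[of 0 A] unfolding E0_def by simp
  qed
  have D1: "distr (density M (\<lambda>x. 2 * indicator E1 x)) \<Pi>1 Wv = \<Pi>1"
    unfolding \<Pi>1_def Wv_def
  proof (rule distr_Wv[OF assms(1) assms(3) finV _ E1m])
    show "\<forall>v\<in>V. W v \<in> M \<rightarrow>\<^sub>M \<mu>1" using Wm1 by auto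
    fix A assume "\<forall>u\<in>V. A u \<in> sets \<mu>1"
    then show "measure M {x \<in> space M. x \<in> E1 \<and> (\<forall>u\<in>V. W u x \<in> A u)} = 1 / 2 * (\<Prod>u\<in>V. measure \<mu>1 (A u))"
      using law[of 1 A] s10 unfolding E1_def by simp
  qed
  have PD: "\<Pi>1 = density \<Pi>0 (\<lambda>y. \<Prod>u\<in>V. ennreal (\<rho> (y u)))"
    unfolding \<Pi>0_def \<Pi>1_def by (rule PiM_density[OF assms(2,3) finV rhom dens])
  define L where "L = (\<lambda>x. \<Prod>u\<in>V. \<rho> (W u x))"
  have Lm[measurable]: "L \<in> borel_measurable M" unfolding L_def by measurable
  have L_nn: "\<And>x. L x \<ge> 0" unfolding L_def using rho_nn by (auto intro: prod_nonneg)
  have prodm[measurable]: "(\<lambda>y. \<Prod>u\<in>V. ennreal (\<rho> (y u))) \<in> borel_measurable \<Pi>0"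
    unfolding \<Pi>0_def by measurable
  have KEY2: "(\<integral>\<^sup>+x. 2 * indicator E1 x * h (Wv x) \<partial>M) = (\<integral>\<^sup>+x. 2 * indicator E0 x * (ennreal (L x) * h (Wv x)) \<partial>M)"
    if hm: "h \<in> borel_measurable \<Pi>0" for h
  proof -
    have hm1: "h \<in> borel_measurable \<Pi>1" using hm sP by (simp cong: measurable_cong_sets)
    have "(\<integral>\<^sup>+x. 2 * indicator E1 x * h (Wv x) \<partial>M) = (\<integral>\<^sup>+x. h (Wv x) \<partial>density M (\<lambda>x. 2 * indicator E1 x))"
      by (subst nn_integral_density) (use hm1 Wvm1 in auto)
    also have "\<dots> = (\<integral>\<^sup>+y. h y \<partial>distr (density M (\<lambda>x. 2 * indicator E1 x)) \<Pi>1 Wv)"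
      by (subst nn_integral_distr) (use hm1 Wvm1 in auto)
    also have "\<dots> = (\<integral>\<^sup>+y. h y \<partial>\<Pi>1)" by (simp add: D1)
    also have "\<dots> = (\<integral>\<^sup>+y. (\<Prod>u\<in>V. ennreal (\<rho> (y u))) * h y \<partial>\<Pi>0)"
      by (subst PD, subst nn_integral_density) (use hm in auto)
    also have "\<dots> = (\<integral>\<^sup>+y. (\<Prod>u\<in>V. ennreal (\<rho> (y u))) * h y \<partial>distr (density M (\<lambda>x. 2 * indicator E0 x)) \<Pi>0 Wv)"
      by (simp add: D0)
    also have "\<dots> = (\<integral>\<^sup>+x. (\<Prod>u\<in>V. ennreal (\<rho> (Wv x u))) * h (Wv x) \<partial>density M (\<lambda>x. 2 * indicator E0 x))"
      by (subst nn_integral_distr) (use hm in auto)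
    also have "\<dots> = (\<integral>\<^sup>+x. 2 * indicator E0 x * ((\<Prod>u\<in>V. ennreal (\<rho> (Wv x u))) * h (Wv x)) \<partial>M)"
      by (subst nn_integral_density) (use hm in auto)
    also have "\<dots> = (\<integral>\<^sup>+x. 2 * indicator E0 x * (ennreal (L x) * h (Wv x)) \<partial>M)"
      by (intro nn_integral_cong) (auto simp: L_def Wv_def prod_ennreal rho_nn)
    finally show ?thesis .
  qed
  have KEY: "(\<integral>\<^sup>+x. ennreal (N1 x) * h (Wv x) \<partial>M) = (\<integral>\<^sup>+x. ennreal (N0 x * L x) * h (Wv x) \<partial>M)"
    if hm: "h \<in> borel_measurable \<Pi>0" for h
  proof -
    have half: "(1/2) * (2::ennreal) = 1" by (simp add: ennreal_divide_times)
    have "(\<integral>\<^sup>+x. ennreal (N1 x) * h (Wv x) \<partial>M) = (\<integral>\<^sup>+x. (1/2) * (2 * indicator E1 x * h (Wv x)) \<partial>M)"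
      by (intro nn_integral_cong) (auto simp: half N1_def E1_def indicator_def ennreal_mult[symmetric] mult.assoc[symmetric]
          simp del: ennreal_mult)
    also have "\<dots> = (1/2) * (\<integral>\<^sup>+x. 2 * indicator E1 x * h (Wv x) \<partial>M)"
      by (rule nn_integral_cmult) (use hm in auto)
    also have "\<dots> = (1/2) * (\<integral>\<^sup>+x. 2 * indicator E0 x * (ennreal (L x) * h (Wv x)) \<partial>M)"
      by (simp add: KEY2[OF hm])
    also have "\<dots> = (\<integral>\<^sup>+x. (1/2) * (2 * indicator E0 x * (ennreal (L x) * h (Wv x))) \<partial>M)"
      by (rule nn_integral_cmult[symmetric]) (use hm in auto)
    also have "\<dots> = (\<integral>\<^sup>+x. ennreal (N0 x * L x) * h (Wv x) \<partial>M)"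
      by (intro nn_integral_cong) (auto simp: half N0_def E0_def indicator_def mult.assoc[symmetric])
    finally show ?thesis .
  qed
  define MW where "MW = sigma (space M) (sigma_signals M V W \<mu>0)"
  have sig_eq: "sigma_signals M V W \<mu>0 = {Wv -` B \<inter> space M | B. B \<in> sets \<Pi>0}"
    using sigma_signals_eq[OF assms(12)] unfolding Wv_def \<Pi>0_def .
  have sig_sub: "sigma_signals M V W \<mu>0 \<subseteq> sets M"
    unfolding sig_eq using Wvm by (auto intro: measurable_sets)
  have G_pow: "(\<Union>v\<in>V. {W v -` A \<inter> space M |A. A \<in> sets \<mu>0}) \<subseteq> Pow (space M)" by auto
  have sig_pow: "sigma_signals M V W \<mu>0 \<subseteq> Pow (space M)"
    using sig_sub sets.sets_into_space by auto
  have setsMW: "sets MW = sigma_signals M V W \<mu>0"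
  proof -
    have "sets MW = sigma_sets (space M) (sigma_signals M V W \<mu>0)"
      unfolding MW_def using sig_pow by (rule sets_measure_of)
    also have "\<dots> = sigma_signals M V W \<mu>0"
      unfolding sigma_signals_def using G_pow by (rule sigma_sets_sigma_sets_eq)
    finally show ?thesis .
  qed
  have spMW: "space MW = space M" unfolding MW_def by (simp add: space_measure_of_conv)
  have subMW: "subalgebra M MW" unfolding subalgebra_def using spMW setsMW sig_sub by auto
  have spF: "\<And>u. u \<in> V \<Longrightarrow> space (F u) = space M" using assms(14) by (auto simp: subalgebra_def)
  have Fsub: "\<And>u. u\<in>V \<Longrightarrow> subalgebra MW (F u)"
    unfolding subalgebra_def using spMW spF assms(16) setsMW by auto
  have FmMW: "\<And>u f. u\<in>V \<Longrightarrow> f \<in> borel_measurable (F u) \<Longrightarrow> f \<in> borel_measurable MW"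
    using measurable_from_subalg[OF Fsub] by blast
  have MWM: "\<And>f. f \<in> borel_measurable MW \<Longrightarrow> f \<in> borel_measurable M"
    using measurable_from_subalg[OF subMW] by blast
  have FM: "\<And>u f. u\<in>V \<Longrightarrow> f \<in> borel_measurable (F u) \<Longrightarrow> f \<in> borel_measurable M"
    using FmMW MWM by blast
  define Q1 where "Q1 = density M (\<lambda>x. ennreal (N1 x))"
  define Q2 where "Q2 = density M (\<lambda>x. ennreal (N0 x * L x))"
  have subQ1: "subalgebra Q1 MW" using subMW unfolding Q1_def subalgebra_def by simp
  have subQ2: "subalgebra Q2 MW" using subMW unfolding Q2_def subalgebra_def by simp
  have RR: "restr_to_subalg Q1 MW = restr_to_subalg Q2 MW"
  proof (rule measure_eqI)
    show "sets (restr_to_subalg Q1 MW) = sets (restr_to_subalg Q2 MW)"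
      using sets_restr_to_subalg[OF subQ1] sets_restr_to_subalg[OF subQ2] by simp
    fix A assume "A \<in> sets (restr_to_subalg Q1 MW)"
    then have A: "A \<in> sets MW" using sets_restr_to_subalg[OF subQ1] by simp
    then obtain B where B: "B \<in> sets \<Pi>0" "A = Wv -` B \<inter> space M" using setsMW sig_eq by auto
    have AM: "A \<in> sets M" using A subMW by (auto simp: subalgebra_def)
    have "emeasure (restr_to_subalg Q1 MW) A = emeasure Q1 A" using emeasure_restr_to_subalg[OF subQ1 A] .
    also have "\<dots> = (\<integral>\<^sup>+x. ennreal (N1 x) * indicator A x \<partial>M)" unfolding Q1_def using AM by (simp add: emeasure_density)
    also have "\<dots> = (\<integral>\<^sup>+x. ennreal (N1 x) * indicator B (Wv x) \<partial>M)"
      by (intro nn_integral_cong) (auto simp: B indicator_def)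
    also have "\<dots> = (\<integral>\<^sup>+x. ennreal (N0 x * L x) * indicator B (Wv x) \<partial>M)"
      using B(1) by (intro KEY) auto
    also have "\<dots> = (\<integral>\<^sup>+x. ennreal (N0 x * L x) * indicator A x \<partial>M)"
      by (intro nn_integral_cong) (auto simp: B indicator_def)
    also have "\<dots> = emeasure Q2 A" unfolding Q2_def using AM by (simp add: emeasure_density)
    also have "\<dots> = emeasure (restr_to_subalg Q2 MW) A" using emeasure_restr_to_subalg[OF subQ2 A] by simp
    finally show "emeasure (restr_to_subalg Q1 MW) A = emeasure (restr_to_subalg Q2 MW) A" .
  qed
  have N1nn: "\<And>x. N1 x \<ge> 0" unfolding N1_def by auto
  have N0nn: "\<And>x. N0 x \<ge> 0" unfolding N0_def by auto
  have N1le: "\<And>x. N1 x \<le> 1" unfolding N1_def by auto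
  have N0le: "\<And>x. N0 x \<le> 1" unfolding N0_def by auto
  interpret Q1: finite_measure Q1
  proof
    have "emeasure Q1 (space Q1) = (\<integral>\<^sup>+x. ennreal (N1 x) * indicator (space M) x \<partial>M)"
      unfolding Q1_def by (simp add: emeasure_density)
    also have "\<dots> \<le> (\<integral>\<^sup>+x. 1 \<partial>M)" using N1le by (intro nn_integral_mono) (auto simp: indicator_def)
    also have "\<dots> < \<infinity>" using M.emeasure_space_1 by simp
    finally show "emeasure Q1 (space Q1) \<noteq> \<infinity>" by simp
  qed
  have Rnn: "(\<integral>\<^sup>+x. ennreal (N1 x) * f x \<partial>M) = (\<integral>\<^sup>+x. ennreal (N0 x * L x) * f x \<partial>M)"
    if fm: "f \<in> borel_measurable MW" for f
  proof -
    have fM[measurable]: "f \<in> borel_measurable M" using MWM[OF fm] .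
    have "(\<integral>\<^sup>+x. ennreal (N1 x) * f x \<partial>M) = (\<integral>\<^sup>+x. f x \<partial>Q1)"
      unfolding Q1_def by (simp add: nn_integral_density)
    also have "\<dots> = (\<integral>\<^sup>+x. f x \<partial>restr_to_subalg Q1 MW)"
      by (rule nn_integral_subalgebra2[OF subQ1 fm, symmetric])
    also have "\<dots> = (\<integral>\<^sup>+x. f x \<partial>restr_to_subalg Q2 MW)" by (simp add: RR)
    also have "\<dots> = (\<integral>\<^sup>+x. f x \<partial>Q2)" by (rule nn_integral_subalgebra2[OF subQ2 fm])
    also have "\<dots> = (\<integral>\<^sup>+x. ennreal (N0 x * L x) * f x \<partial>M)"
      unfolding Q2_def by (simp add: nn_integral_density)
    finally show ?thesis .
  qed
  have Rint: "integrable M (\<lambda>x. N0 x * L x * f x) \<and> (\<integral>x. N1 x * f x \<partial>M) = (\<integral>x. N0 x * L x * f x \<partial>M)"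
    if fm: "f \<in> borel_measurable MW" and fb: "\<And>x. \<bar>f x\<bar> \<le> B" for f B
  proof -
    have fM[measurable]: "f \<in> borel_measurable M" using MWM[OF fm] .
    have i1: "integrable Q1 f"
      by (rule Q1.integrable_const_bound[where B=B]) (use fb in \<open>auto simp: Q1_def\<close>)
    have "integrable (restr_to_subalg Q1 MW) f" by (rule integrable_in_subalg[OF subQ1 fm i1])
    then have "integrable (restr_to_subalg Q2 MW) f" by (simp add: RR)
    then have i2: "integrable Q2 f" by (rule integrable_from_subalg[OF subQ2])
    then show ?thesis
    proof -
      have intL: "integrable M (\<lambda>x. (N0 x * L x) *\<^sub>R f x)" using i2 unfolding Q2_def
        by (subst (asm) integrable_density) (auto simp: N0nn L_nn)
      have "(\<integral>x. N1 x * f x \<partial>M) = (\<integral>x. f x \<partial>Q1)"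
        unfolding Q1_def by (subst integral_density) (auto simp: N1nn)
      also have "\<dots> = (\<integral>x. f x \<partial>restr_to_subalg Q1 MW)"
        by (rule integral_subalgebra2[OF subQ1 fm, symmetric])
      also have "\<dots> = (\<integral>x. f x \<partial>restr_to_subalg Q2 MW)" by (simp add: RR)
      also have "\<dots> = (\<integral>x. f x \<partial>Q2)" by (rule integral_subalgebra2[OF subQ2 fm])
      also have "\<dots> = (\<integral>x. N0 x * L x * f x \<partial>M)"
        unfolding Q2_def by (subst integral_density) (auto simp: N0nn L_nn)
      finally show ?thesis using intL by simp
    qed
  qed
  have FSA: "finite_measure_subalgebra M (F u)" if u: "u \<in> V" for u
    by (intro finite_measure_subalgebra.intro finite_measure_subalgebra_axioms.intro M.finite_measure_axioms)
       (use assms(14) u in auto)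
  have post_eq: "posterior M (F u) S = real_cond_exp M (F u) N1" for u
    unfolding posterior_def N1_def ..
  have Pm: "posterior M (F u) S \<in> borel_measurable M" if u: "u \<in> V" for u
  proof -
    interpret Fu: finite_measure_subalgebra M "F u" using FSA[OF u] .
    show ?thesis unfolding post_eq by simp
  qed
  have CE: "integrable M (\<lambda>x. k x * posterior M (F u) S x) \<and> (\<integral>x. k x * posterior M (F u) S x \<partial>M) = (\<integral>x. k x * N1 x \<partial>M)"
    if u: "u \<in> V" and km: "k \<in> borel_measurable (F u)" and ki: "integrable M (\<lambda>x. k x * N1 x)" for u k
  proof -
    interpret Fu: finite_measure_subalgebra M "F u" using FSA[OF u] .
    show ?thesis unfolding post_eq using Fu.real_cond_exp_intg[OF ki km N1m] by simp
  qed
  have N1int: "integrable M N1"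
    by (rule M.integrable_const_bound[where B=1]) (auto simp: N1_def)
  have Pbd: "AE x in M. 0 \<le> posterior M (F u) S x \<and> posterior M (F u) S x \<le> 1" if u: "u \<in> V" for u
  proof -
    interpret Fu: finite_measure_subalgebra M "F u" using FSA[OF u] .
    have "AE x in M. real_cond_exp M (F u) N1 x \<ge> 0"
      by (rule Fu.real_cond_exp_pos) (auto simp: N1nn)
    moreover have "AE x in M. real_cond_exp M (F u) N1 x \<le> 1"
      by (rule Fu.real_cond_exp_le_c[OF N1int]) (auto simp: N1le)
    ultimately show ?thesis unfolding post_eq by eventually_elim auto
  qed
  obtain u0 where u0: "u0 \<in> V" using assms(9) by auto
  have XP: "AE x in M. \<forall>u\<in>V. X x = posterior M (F u) S x" by fact
  have X01: "AE x in M. 0 \<le> X x \<and> X x \<le> 1" using XP Pbd[OF u0] by eventually_elim (use u0 in auto)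
  have "\<forall>w\<in>V. \<exists>g. g \<in> borel_measurable (F w) \<and> (AE x in M. X x = g x) \<and> (\<forall>x. 0 \<le> g x \<and> g x \<le> 1)"
  proof
    fix w assume w: "w \<in> V"
    obtain g where g: "g \<in> borel_measurable (F w)" "AE x in M. posterior M (F u0) S x = g x"
      using common u0 w by blast
    have [measurable]: "g \<in> borel_measurable (F w)" by (fact g(1))
    define g' where "g' x = max 0 (min 1 (g x))" for x
    have "g' \<in> borel_measurable (F w)" unfolding g'_def by measurable
    moreover have "AE x in M. X x = g' x" using XP g(2) X01 by eventually_elim (use u0 in \<open>auto simp: g'_def\<close>)
    moreover have "\<forall>x. 0 \<le> g' x \<and> g' x \<le> 1" by (auto simp: g'_def)
    ultimately show "\<exists>g. g \<in> borel_measurable (F w) \<and> (AE x in M. X x = g x) \<and> (\<forall>x. 0 \<le> g x \<and> g x \<le> 1)"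
      by blast
  qed
  then obtain Gv where Gv: "\<forall>w\<in>V. Gv w \<in> borel_measurable (F w) \<and> (AE x in M. X x = Gv w x) \<and> (\<forall>x. 0 \<le> Gv w x \<and> Gv w x \<le> 1)"
    by metis
  have GvF: "\<And>w. w \<in> V \<Longrightarrow> Gv w \<in> borel_measurable (F w)" using Gv by blast
  have GvX: "\<And>w. w \<in> V \<Longrightarrow> AE x in M. X x = Gv w x" using Gv by blast
  have Gv01: "\<And>w x. w \<in> V \<Longrightarrow> 0 \<le> Gv w x \<and> Gv w x \<le> 1" using Gv by blast
  have GvM: "\<And>w. w \<in> V \<Longrightarrow> Gv w \<in> borel_measurable M" using GvF FM by blast
  have CEb1: "(\<integral>x. N1 x * k x \<partial>M) = (\<integral>x. Gv u x * k x \<partial>M)"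
    if u: "u \<in> V" and km: "k \<in> borel_measurable (F u)" and kb: "\<And>x. \<bar>k x\<bar> \<le> B" for u k B
  proof -
    have kM[measurable]: "k \<in> borel_measurable M" using FM[OF u km] .
    have [measurable]: "Gv u \<in> borel_measurable M" using GvM[OF u] .
    have [measurable]: "posterior M (F u) S \<in> borel_measurable M" using Pm[OF u] .
    have ki: "integrable M (\<lambda>x. k x * N1 x)"
    proof (rule M.integrable_const_bound[where B=B])
      show "AE x in M. norm (k x * N1 x) \<le> B"
      proof (intro AE_I2)
        fix x show "norm (k x * N1 x) \<le> B" using kb[of x] abs_ge_zero[of "k x"] by (auto simp: N1_def)
      qed
    qed simp
    have "(\<integral>x. N1 x * k x \<partial>M) = (\<integral>x. k x * posterior M (F u) S x \<partial>M)"
      using CE[OF u km ki] by (simp add: mult.commute)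
    also have "\<dots> = (\<integral>x. Gv u x * k x \<partial>M)"
    proof -
      have "AE x in M. k x * posterior M (F u) S x = Gv u x * k x"
        using XP GvX[OF u] by eventually_elim (use u in auto)
      then show ?thesis by (intro integral_cong_AE) auto
    qed
    finally show ?thesis .
  qed
  have bint: "integrable M f" if "f \<in> borel_measurable M" "\<And>x. \<bar>f x\<bar> \<le> B" for f :: "'a \<Rightarrow> real" and B :: real
    by (rule M.integrable_const_bound[where B=B]) (use that in auto)
  have N1ab: "\<bar>N1 x\<bar> \<le> 1" for x using N1nn[of x] N1le[of x] by (auto simp: abs_le_iff)
  have N0ab: "\<bar>N0 x\<bar> \<le> 1" for x using N0nn[of x] N0le[of x] by (auto simp: abs_le_iff)
  have Gab: "\<bar>Gv u x\<bar> \<le> 1" "\<bar>1 - Gv u x\<bar> \<le> 1" if "u \<in> V" for u x using Gv01[OF that, of x] by auto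
  have CEb0: "(\<integral>x. N0 x * k x \<partial>M) = (\<integral>x. (1 - Gv u x) * k x \<partial>M)"
    if u: "u \<in> V" and km: "k \<in> borel_measurable (F u)" and kb: "\<And>x. \<bar>k x\<bar> \<le> B" for u k B
  proof -
    have kM[measurable]: "k \<in> borel_measurable M" using FM[OF u km] .
    have [measurable]: "Gv u \<in> borel_measurable M" using GvM[OF u] .
    have i1: "integrable M k" by (rule bint[OF kM kb])
    have i2: "integrable M (\<lambda>x. N1 x * k x)" by (rule bint[of _ B]) (auto intro: helpM N1ab kb)
    have i3: "integrable M (\<lambda>x. Gv u x * k x)" by (rule bint[of _ B]) (auto intro: helpM Gab[OF u] kb)
    have "(\<integral>x. N0 x * k x \<partial>M) = (\<integral>x. k x - N1 x * k x \<partial>M)"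
      by (intro Bochner_Integration.integral_cong refl) (auto simp: N01 algebra_simps)
    also have "\<dots> = (\<integral>x. k x \<partial>M) - (\<integral>x. N1 x * k x \<partial>M)" using i1 i2 by simp
    also have "\<dots> = (\<integral>x. k x \<partial>M) - (\<integral>x. Gv u x * k x \<partial>M)" using CEb1[OF u km kb] by simp
    also have "\<dots> = (\<integral>x. k x - Gv u x * k x \<partial>M)" using i1 i3 by simp
    also have "\<dots> = (\<integral>x. (1 - Gv u x) * k x \<partial>M)" by (simp add: algebra_simps)
    finally show ?thesis .
  qed
  have MARG: "(\<integral>\<^sup>+x. 2 * indicator E1 x * f (W u x) \<partial>M) = (\<integral>\<^sup>+y. f y \<partial>\<mu>1)"
    if u: "u \<in> V" and fm: "f \<in> borel_measurable \<mu>0" for u f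
  proof -
    interpret P1: product_sigma_finite "\<lambda>_. \<mu>1" by standard
    have f1[measurable]: "f \<in> borel_measurable \<mu>1" using fm s10 by (simp cong: measurable_cong_sets)
    have hm[measurable]: "(\<lambda>y. f (y u)) \<in> borel_measurable \<Pi>1" unfolding \<Pi>1_def using u by measurable
    have "(\<integral>\<^sup>+x. 2 * indicator E1 x * f (W u x) \<partial>M) = (\<integral>\<^sup>+x. 2 * indicator E1 x * f (Wv x u) \<partial>M)"
      using u by (simp add: Wv_def)
    also have "\<dots> = (\<integral>\<^sup>+x. f (Wv x u) \<partial>density M (\<lambda>x. 2 * indicator E1 x))"
      by (subst nn_integral_density) (use Wvm1 in auto)
    also have "\<dots> = (\<integral>\<^sup>+y. f (y u) \<partial>distr (density M (\<lambda>x. 2 * indicator E1 x)) \<Pi>1 Wv)"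
      by (subst nn_integral_distr) (use Wvm1 in auto)
    also have "\<dots> = (\<integral>\<^sup>+y. f (y u) \<partial>\<Pi>1)" by (simp add: D1)
    also have "\<dots> = (\<integral>\<^sup>+y. (\<Prod>v\<in>V. (if v = u then f else (\<lambda>_. 1)) (y v)) \<partial>\<Pi>1)"
    proof (intro nn_integral_cong)
      fix y :: "'v \<Rightarrow> 'b"
      have "(\<Prod>v\<in>V. (if v = u then f else (\<lambda>_. 1)) (y v)) = (\<Prod>v\<in>V. if v = u then f (y v) else 1)"
        by (intro prod.cong) auto
      also have "\<dots> = f (y u)" using u finV by (simp add: prod.delta)
      finally show "f (y u) = (\<Prod>v\<in>V. (if v = u then f else (\<lambda>_. 1)) (y v))" by simp
    qed
    also have "\<dots> = (\<Prod>v\<in>V. integral\<^sup>N \<mu>1 (if v = u then f else (\<lambda>_. 1)))"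
      unfolding \<Pi>1_def by (rule P1.product_nn_integral_prod[OF finV]) auto
    also have "\<dots> = (\<integral>\<^sup>+y. f y \<partial>\<mu>1)"
    proof -
      have "(\<Prod>v\<in>V. integral\<^sup>N \<mu>1 (if v = u then f else (\<lambda>_. 1))) = (\<Prod>v\<in>V. if v = u then integral\<^sup>N \<mu>1 f else 1)"
        by (intro prod.cong) (auto simp: mu1.emeasure_space_1)
      also have "\<dots> = integral\<^sup>N \<mu>1 f" using u finV by (simp add: prod.delta)
      finally show ?thesis .
    qed
    finally show ?thesis .
  qed
  have WF: "W u \<in> measurable (F u) \<mu>0" if u: "u \<in> V" for u
  proof -
    have sp: "W u \<in> space M \<rightarrow> space \<mu>0" using Wm0[OF u] by (auto simp: measurable_def)
    have "subalgebra (F u) (vimage_algebra (space M) (W u) \<mu>0)"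
      unfolding subalgebra_def using assms(15) u spF[OF u] by auto
    then show ?thesis using measurable_from_subalg measurable_vimage_algebra1[OF sp] by blast
  qed
  define G0 where "G0 = Gv u0"
  have G0F[measurable]: "G0 \<in> borel_measurable (F u0)" unfolding G0_def using GvF[OF u0] .
  have G0M[measurable]: "G0 \<in> borel_measurable M" unfolding G0_def using GvM[OF u0] .
  have G001: "\<And>x. 0 \<le> G0 x \<and> G0 x \<le> 1" unfolding G0_def using Gv01[OF u0] by blast
  have XG0: "AE x in M. X x = G0 x" unfolding G0_def using GvX[OF u0] .
  have Xm[measurable]: "X \<in> borel_measurable M" by fact
  define lm where "lm u x = - min (ln (\<rho> (W u x))) 0" for u x
  define lp where "lp x = max (ln (G0 x) - ln (1 - G0 x)) 0" for x
  define a where "a u x = ln (\<rho> (W u x)) - (if u = u0 then ln (G0 x) - ln (1 - G0 x) else 0)" for u x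
  define Z where "Z x = N0 x * (1 - X x) * (L x * (1 - X x) - X x)" for x
  have lmF: "lm u \<in> borel_measurable (F u)" if u: "u \<in> V" for u
  proof -
    have [measurable]: "W u \<in> measurable (F u) \<mu>0" using WF[OF u] .
    show ?thesis unfolding lm_def by measurable
  qed
  have aF: "a u \<in> borel_measurable (F u)" if u: "u \<in> V" for u
  proof (cases "u = u0")
    case True
    have [measurable]: "W u0 \<in> measurable (F u0) \<mu>0" using WF[OF u0] .
    have "(\<lambda>x. ln (\<rho> (W u0 x)) - (ln (G0 x) - ln (1 - G0 x))) \<in> borel_measurable (F u0)" by measurable
    then show ?thesis unfolding a_def using True by simp
  next
    case False
    have [measurable]: "W u \<in> measurable (F u) \<mu>0" using WF[OF u] .
    show ?thesis unfolding a_def using False by simp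
  qed
  have aM[measurable]: "a u \<in> borel_measurable M" if "u \<in> V" for u using FM[OF that aF[OF that]] .
  have lmM[measurable]: "lm u \<in> borel_measurable M" if "u \<in> V" for u using FM[OF that lmF[OF that]] .
  have Zm[measurable]: "Z \<in> borel_measurable M" unfolding Z_def by measurable
  have lpM[measurable]: "lp \<in> borel_measurable M" unfolding lp_def by measurable
  have lm_nn: "\<And>u x. 0 \<le> lm u x" unfolding lm_def by auto
  have lp_nn: "\<And>x. 0 \<le> lp x" unfolding lp_def by auto
  have H1: "(\<integral>x. Z x * \<phi> (a u x) \<partial>M) = 0"
    if u: "u \<in> V" and phim: "\<phi> \<in> borel_measurable borel" and phib: "\<And>t. \<bar>\<phi> t\<bar> \<le> B" for u \<phi> B
  proof -
    define G where "G = Gv u"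
    have GF[measurable]: "G \<in> borel_measurable (F u)" unfolding G_def using GvF[OF u] .
    have GM[measurable]: "G \<in> borel_measurable M" unfolding G_def using GvM[OF u] .
    have G01: "\<And>x. 0 \<le> G x \<and> G x \<le> 1" unfolding G_def using Gv01[OF u] by blast
    have [measurable]: "a u \<in> borel_measurable (F u)" using aF[OF u] .
    have [measurable]: "\<phi> \<in> borel_measurable borel" by fact
    define k1 where "k1 x = (1 - G x) * (1 - G x) * \<phi> (a u x)" for x
    define k2 where "k2 x = (1 - G x) * G x * \<phi> (a u x)" for x
    have k1F: "k1 \<in> borel_measurable (F u)" unfolding k1_def by measurable
    have k2F: "k2 \<in> borel_measurable (F u)" unfolding k2_def by measurable
    have k1M[measurable]: "k1 \<in> borel_measurable M" using FM[OF u k1F] .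
    have k2M[measurable]: "k2 \<in> borel_measurable M" using FM[OF u k2F] .
    have k1b: "\<bar>k1 x\<bar> \<le> B" for x
    proof -
      have "\<bar>(1 - G x) * (1 - G x)\<bar> \<le> 1" using G01[of x] by (auto simp: abs_mult mult_le_one)
      then show ?thesis unfolding k1_def by (rule helpM) (rule phib)
    qed
    have k2b: "\<bar>k2 x\<bar> \<le> B" for x
    proof -
      have "\<bar>(1 - G x) * G x\<bar> \<le> 1" using G01[of x] by (auto simp: abs_mult mult_le_one)
      then show ?thesis unfolding k2_def by (rule helpM) (rule phib)
    qed
    have R1: "integrable M (\<lambda>x. N0 x * L x * k1 x) \<and> (\<integral>x. N1 x * k1 x \<partial>M) = (\<integral>x. N0 x * L x * k1 x \<partial>M)"
      by (rule Rint[OF FmMW[OF u k1F] k1b])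
    have i2: "integrable M (\<lambda>x. N0 x * k2 x)" by (rule bint[of _ B]) (auto intro: helpM N0ab k2b)
    have "AE x in M. Z x * \<phi> (a u x) = N0 x * L x * k1 x - N0 x * k2 x"
      using GvX[OF u] by eventually_elim (simp add: Z_def k1_def k2_def G_def algebra_simps)
    then have "(\<integral>x. Z x * \<phi> (a u x) \<partial>M) = (\<integral>x. N0 x * L x * k1 x - N0 x * k2 x \<partial>M)"
      using u by (intro integral_cong_AE) auto
    also have "\<dots> = (\<integral>x. N0 x * L x * k1 x \<partial>M) - (\<integral>x. N0 x * k2 x \<partial>M)"
      using R1 i2 by simp
    also have "\<dots> = (\<integral>x. G x * k1 x \<partial>M) - (\<integral>x. (1 - G x) * k2 x \<partial>M)"
      using R1 CEb1[OF u k1F k1b] CEb0[OF u k2F k2b] by (simp add: G_def)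
    also have "\<dots> = 0" by (simp add: k1_def k2_def algebra_simps)
    finally show ?thesis .
  qed
  have LMb: "(\<integral>\<^sup>+x. ennreal (N1 x) * ennreal (lm u x) \<partial>M) \<le> 1" if u: "u \<in> V" for u
  proof -
    have fm: "(\<lambda>y. ennreal (- min (ln (\<rho> y)) 0)) \<in> borel_measurable \<mu>0" by measurable
    have "(\<integral>\<^sup>+x. ennreal (N1 x) * ennreal (lm u x) \<partial>M)
        \<le> (\<integral>\<^sup>+x. 2 * indicator E1 x * ennreal (- min (ln (\<rho> (W u x))) 0) \<partial>M)"
    proof (intro nn_integral_mono)
      fix x assume x: "x \<in> space M"
      have "ennreal (N1 x) \<le> 2 * indicator E1 x" using x by (auto simp: N1_def E1_def indicator_def)
      then show "ennreal (N1 x) * ennreal (lm u x) \<le> 2 * indicator E1 x * ennreal (- min (ln (\<rho> (W u x))) 0)"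
        unfolding lm_def by (intro mult_right_mono) auto
    qed
    also have "\<dots> = (\<integral>\<^sup>+y. ennreal (- min (ln (\<rho> y)) 0) \<partial>\<mu>1)"
      by (rule MARG[OF u fm])
    also have "\<dots> = (\<integral>\<^sup>+y. ennreal (\<rho> y) * ennreal (- min (ln (\<rho> y)) 0) \<partial>\<mu>0)"
      by (subst dens) (simp add: nn_integral_density)
    also have "\<dots> \<le> (\<integral>\<^sup>+y. 1 \<partial>\<mu>0)"
    proof (intro nn_integral_mono)
      fix y
      have "\<rho> y * (- min (ln (\<rho> y)) 0) \<le> 1" using helpA[OF rho_nn[of y]] .
      then show "ennreal (\<rho> y) * ennreal (- min (ln (\<rho> y)) 0) \<le> 1"
        by (simp add: ennreal_mult''[symmetric] rho_nn)
    qed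
    also have "\<dots> = 1" by (simp add: mu0.emeasure_space_1)
    finally show ?thesis .
  qed
  have LMb2: "(\<integral>\<^sup>+x. ennreal (N0 x * L x) * ennreal (lm u x) \<partial>M) \<le> 1" if u: "u \<in> V" for u
  proof -
    have "(\<lambda>x. ennreal (lm u x)) \<in> borel_measurable MW" using FmMW[OF u lmF[OF u]] by measurable
    then show ?thesis using Rnn LMb[OF u] by metis
  qed
  have iA: "integrable M (\<lambda>x. N0 x * L x * lm u x)" if u: "u \<in> V" for u
  proof (rule integrableI_nonneg)
    show "(\<lambda>x. N0 x * L x * lm u x) \<in> borel_measurable M" using u by measurable
    show "AE x in M. 0 \<le> N0 x * L x * lm u x" by (auto simp: N0nn L_nn lm_nn)
    have "(\<integral>\<^sup>+x. ennreal (N0 x * L x * lm u x) \<partial>M) = (\<integral>\<^sup>+x. ennreal (N0 x * L x) * ennreal (lm u x) \<partial>M)"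
      by (intro nn_integral_cong) (simp add: ennreal_mult N0nn L_nn lm_nn)
    also have "\<dots> \<le> 1" by (rule LMb2[OF u])
    finally show "(\<integral>\<^sup>+x. ennreal (N0 x * L x * lm u x) \<partial>M) < \<infinity>" by (simp add: le_less_trans)
  qed
  have iB: "integrable M (\<lambda>x. X x * lm u x)" if u: "u \<in> V" for u
  proof -
    have i1: "integrable M (\<lambda>x. lm u x * N1 x)"
    proof (rule integrableI_nonneg)
      show "(\<lambda>x. lm u x * N1 x) \<in> borel_measurable M" using u by measurable
      show "AE x in M. 0 \<le> lm u x * N1 x" by (auto simp: N1nn lm_nn)
      have "(\<integral>\<^sup>+x. ennreal (lm u x * N1 x) \<partial>M) = (\<integral>\<^sup>+x. ennreal (N1 x) * ennreal (lm u x) \<partial>M)"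
        by (intro nn_integral_cong) (simp add: ennreal_mult N1nn lm_nn mult.commute)
      also have "\<dots> \<le> 1" by (rule LMb[OF u])
      finally show "(\<integral>\<^sup>+x. ennreal (lm u x * N1 x) \<partial>M) < \<infinity>" by (simp add: le_less_trans)
    qed
    have "integrable M (\<lambda>x. lm u x * posterior M (F u) S x)" using CE[OF u lmF[OF u] i1] by blast
    moreover have "AE x in M. lm u x * posterior M (F u) S x = X x * lm u x"
      using XP by eventually_elim (use u in auto)
    ultimately show ?thesis using u Pm[OF u] by (subst integrable_cong_AE[symmetric]) auto
  qed
  have iC: "integrable M (\<lambda>x. N0 x * L x)"
  proof (rule integrableI_nonneg)
    show "(\<lambda>x. N0 x * L x) \<in> borel_measurable M" by measurable
    show "AE x in M. 0 \<le> N0 x * L x" by (auto simp: N0nn L_nn)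
    have "(\<integral>\<^sup>+x. ennreal (N0 x * L x) \<partial>M) = (\<integral>\<^sup>+x. ennreal (N0 x * L x) * (\<lambda>_. 1) x \<partial>M)" by simp
    also have "\<dots> = (\<integral>\<^sup>+x. ennreal (N1 x) * (\<lambda>_. 1) x \<partial>M)" by (rule Rnn[symmetric]) simp
    also have "\<dots> \<le> (\<integral>\<^sup>+x. 1 \<partial>M)" using N1le by (intro nn_integral_mono) auto
    also have "\<dots> = 1" by (simp add: M.emeasure_space_1)
    finally show "(\<integral>\<^sup>+x. ennreal (N0 x * L x) \<partial>M) < \<infinity>" by (simp add: le_less_trans)
  qed
  have iX: "integrable M X"
  proof -
    have "integrable M G0" by (rule bint[of _ 1]) (use G001 in auto)
    then show ?thesis using XG0 by (subst integrable_cong_AE) auto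
  qed
  have am_le: "- min (a u x) 0 \<le> lm u x + lp x" for u x
    unfolding a_def lm_def lp_def by (auto simp: min_def max_def)
  have H2: "integrable M (\<lambda>x. Z x * min (a u x) 0)" if u: "u \<in> V" for u
  proof (rule Bochner_Integration.integrable_bound)
    show "integrable M (\<lambda>x. N0 x * L x * lm u x + X x * lm u x + N0 x * L x + 1)"
      using iA[OF u] iB[OF u] iC by auto
    show "(\<lambda>x. Z x * min (a u x) 0) \<in> borel_measurable M" using u by measurable
    show "AE x in M. norm (Z x * min (a u x) 0) \<le> norm (N0 x * L x * lm u x + X x * lm u x + N0 x * L x + 1)"
      using X01 XG0
    proof eventually_elim
      case (elim x)
      have hb: "(1 - X x) * lp x \<le> 1" using helpB[of "G0 x"] G001[of x] elim by (simp add: lp_def)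
      have "\<bar>N0 x * (1 - X x) * (L x * (1 - X x) - X x) * min (a u x) 0\<bar> \<le> N0 x * L x * lm u x + X x * lm u x + N0 x * L x + 1"
        by (rule helpC) (use elim hb N0nn N0le L_nn lm_nn lp_nn am_le in auto)
      moreover have "0 \<le> N0 x * L x * lm u x + X x * lm u x + N0 x * L x + 1"
        using elim N0nn[of x] L_nn[of x] lm_nn[of u x] by (auto intro!: add_nonneg_nonneg mult_nonneg_nonneg)
      ultimately show ?case by (simp add: Z_def)
    qed
  qed
  have intZ: "integrable M Z"
  proof (rule Bochner_Integration.integrable_bound)
    show "integrable M (\<lambda>x. N0 x * L x * 1 + X x * 1 + N0 x * L x + 1)"
      by (intro Bochner_Integration.integrable_add) (simp_all add: iC iX)
    show "Z \<in> borel_measurable M" by measurable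
    show "AE x in M. norm (Z x) \<le> norm (N0 x * L x * 1 + X x * 1 + N0 x * L x + 1)"
      using X01
    proof eventually_elim
      case (elim x)
      have "\<bar>N0 x * (1 - X x) * (L x * (1 - X x) - X x) * (-1)\<bar> \<le> N0 x * L x * 1 + X x * 1 + N0 x * L x + 1"
        by (rule helpC[where lm=1 and lp=0]) (use elim N0nn N0le L_nn in auto)
      moreover have "0 \<le> N0 x * L x * 1 + X x * 1 + N0 x * L x + 1"
        using elim N0nn[of x] L_nn[of x] by (auto intro!: add_nonneg_nonneg mult_nonneg_nonneg)
      ultimately show ?case by (simp add: Z_def)
    qed
  qed
  have n1u: "AE x in M. S x = 0 \<longrightarrow> 0 < \<rho> (W u x)" if u: "u \<in> V" for u
  proof -
    define Z0 where "Z0 = {y \<in> space \<mu>0. \<rho> y = 0}"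
    have Z0m: "Z0 \<in> sets \<mu>0" unfolding Z0_def by measurable
    have "emeasure \<mu>1 Z0 = (\<integral>\<^sup>+y. ennreal (\<rho> y) * indicator Z0 y \<partial>\<mu>0)"
      using Z0m by (subst dens) (simp add: emeasure_density)
    also have "\<dots> = (\<integral>\<^sup>+y. 0 \<partial>\<mu>0)" by (intro nn_integral_cong) (auto simp: Z0_def indicator_def)
    finally have "Z0 \<in> null_sets \<mu>1" using Z0m s10 by auto
    then have "Z0 \<in> null_sets \<mu>0" using assms(7) unfolding absolutely_continuous_def by auto
    then have "emeasure \<mu>0 Z0 = 0" by (rule null_setsD1)
    then have mZ0: "measure \<mu>0 Z0 = 0" by (simp add: measure_def)
    define A where "A v = (if v = u then Z0 else space \<mu>0)" for v
    have A: "\<forall>v\<in>V. A v \<in> sets \<mu>0" using Z0m by (auto simp: A_def)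
    have "measure M {x \<in> space M. S x = 0 \<and> (\<forall>v\<in>V. W v x \<in> A v)} = 1/2 * (\<Prod>v\<in>V. measure \<mu>0 (A v))"
      using law[of 0 A] A by simp
    also have "(\<Prod>v\<in>V. measure \<mu>0 (A v)) = (\<Prod>v\<in>V. if v = u then measure \<mu>0 Z0 else 1)"
      by (intro prod.cong) (auto simp: A_def mu0.prob_space)
    also have "\<dots> = 0" using u finV mZ0 by (simp add: prod.delta)
    finally have m0: "measure M {x \<in> space M. S x = 0 \<and> (\<forall>v\<in>V. W v x \<in> A v)} = 0" by simp
    have seteq: "{x \<in> space M. S x = 0 \<and> (\<forall>v\<in>V. W v x \<in> A v)} = {x \<in> space M. S x = 0 \<and> \<rho> (W u x) = 0}"
    proof -
      have sp: "\<And>x v. x \<in> space M \<Longrightarrow> v \<in> V \<Longrightarrow> W v x \<in> space \<mu>0"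
        using Wm0 by (blast intro: measurable_space)
      show ?thesis using u sp by (auto simp: A_def Z0_def)
    qed
    have setm: "{x \<in> space M. S x = 0 \<and> \<rho> (W u x) = 0} \<in> sets M" using u by measurable
    have "AE x in M. \<not> (S x = 0 \<and> \<rho> (W u x) = 0)"
      using setm m0 seteq by (subst AE_iff_measurable[OF setm]) (auto simp: M.emeasure_eq_measure)
    then show ?thesis by eventually_elim (use rho_nn in \<open>auto simp: order_le_less\<close>)
  qed
  have n1: "AE x in M. S x = 0 \<longrightarrow> (\<forall>u\<in>V. 0 < \<rho> (W u x))"
  proof -
    have "AE x in M. \<forall>u\<in>V. S x = 0 \<longrightarrow> 0 < \<rho> (W u x)"
      using n1u by (intro eventually_ball_finite[OF finV]) auto
    then show ?thesis by eventually_elim auto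
  qed
  have n2: "AE x in M. S x = 0 \<longrightarrow> G0 x < 1"
  proof -
    define k where "k x = (if G0 x = 1 then 1 else 0 :: real)" for x
    have kF: "k \<in> borel_measurable (F u0)" unfolding k_def by measurable
    have kM[measurable]: "k \<in> borel_measurable M" unfolding k_def by measurable
    have kb: "\<And>x. \<bar>k x\<bar> \<le> 1" by (simp add: k_def)
    have "(\<integral>x. N0 x * k x \<partial>M) = (\<integral>x. (1 - Gv u0 x) * k x \<partial>M)" by (rule CEb0[OF u0 kF kb])
    also have "(\<lambda>x. (1 - Gv u0 x) * k x) = (\<lambda>x. 0)" by (auto simp: k_def G0_def[symmetric] fun_eq_iff)
    finally have "(\<integral>x. N0 x * k x \<partial>M) = 0" by simp
    moreover have "integrable M (\<lambda>x. N0 x * k x)" by (rule bint[of _ 1]) (auto intro: helpM N0ab kb)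
    ultimately have "AE x in M. N0 x * k x = 0"
      by (subst (asm) integral_nonneg_eq_0_iff_AE) (auto simp: N0nn k_def)
    then show ?thesis by eventually_elim (use G001 in \<open>auto simp: N0_def k_def order_le_less split: if_splits\<close>)
  qed
  have n3: "AE x in M. S x = 0 \<longrightarrow> G0 x = 0 \<longrightarrow> L x = 0"
  proof -
    define k where "k x = (if G0 x = 0 then 1 else 0 :: real)" for x
    have kF: "k \<in> borel_measurable (F u0)" unfolding k_def by measurable
    have kM[measurable]: "k \<in> borel_measurable M" unfolding k_def by measurable
    have kb: "\<And>x. \<bar>k x\<bar> \<le> 1" by (simp add: k_def)
    have R: "integrable M (\<lambda>x. N0 x * L x * k x) \<and> (\<integral>x. N1 x * k x \<partial>M) = (\<integral>x. N0 x * L x * k x \<partial>M)"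
      by (rule Rint[OF FmMW[OF u0 kF] kb])
    have "(\<integral>x. N1 x * k x \<partial>M) = (\<integral>x. Gv u0 x * k x \<partial>M)" by (rule CEb1[OF u0 kF kb])
    also have "(\<lambda>x. Gv u0 x * k x) = (\<lambda>x. 0)" by (auto simp: k_def G0_def[symmetric] fun_eq_iff)
    finally have "(\<integral>x. N0 x * L x * k x \<partial>M) = 0" using R by simp
    then have "AE x in M. N0 x * L x * k x = 0"
      using R by (subst (asm) integral_nonneg_eq_0_iff_AE) (auto simp: N0nn L_nn k_def)
    then show ?thesis by eventually_elim (auto simp: N0_def k_def)
  qed
  have H3: "AE x in M. (Z x > 0 \<longrightarrow> (\<Sum>u\<in>V. a u x) > 0) \<and> (Z x < 0 \<longrightarrow> (\<Sum>u\<in>V. a u x) < 0)"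
    using n1 n2 n3 XG0
  proof eventually_elim
    case (elim x)
    show ?case
    proof (cases "S x = 0")
      case False
      then show ?thesis by (simp add: Z_def N0_def)
    next
      case True
      have rp: "\<forall>u\<in>V. 0 < \<rho> (W u x)" using elim True by auto
      have Lp: "0 < L x" unfolding L_def using rp by (intro prod_pos) auto
      have g1: "G0 x < 1" using elim True by auto
      have g0: "0 < G0 x" using elim True Lp G001[of x] by (auto simp: order_le_less)
      have sa: "(\<Sum>u\<in>V. a u x) = ln (L x) - (ln (G0 x) - ln (1 - G0 x))"
      proof -
        have "(\<Sum>u\<in>V. a u x) = (\<Sum>u\<in>V. ln (\<rho> (W u x))) - (\<Sum>u\<in>V. if u = u0 then ln (G0 x) - ln (1 - G0 x) else 0)"
          unfolding a_def by (simp add: sum_subtractf)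
        also have "(\<Sum>u\<in>V. if u = u0 then ln (G0 x) - ln (1 - G0 x) else 0) = ln (G0 x) - ln (1 - G0 x)"
          using u0 finV by (simp add: sum.delta)
        also have "(\<Sum>u\<in>V. ln (\<rho> (W u x))) = ln (L x)"
          unfolding L_def using rp finV by (subst ln_prod) auto
        finally show ?thesis .
      qed
      have ZZ: "Z x = (1 - G0 x) * (L x * (1 - G0 x) - G0 x)" using elim True by (simp add: Z_def N0_def)
      show ?thesis unfolding sa ZZ using helpD[OF Lp g0 g1] by blast
    qed
  qed
  have Zzero: "AE x in M. Z x = 0"
    by (rule core[OF finV aM intZ H1 H2 H3]) auto
  have ZF: "AE x in M. S x = 0 \<longrightarrow> G0 x * (1 + L x) = L x"
    using Zzero n2 XG0
  proof eventually_elim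
    case (elim x)
    show ?case
    proof
      assume S0: "S x = 0"
      have "(1 - G0 x) * (L x * (1 - G0 x) - G0 x) = 0" using elim S0 by (simp add: Z_def N0_def)
      moreover have "1 - G0 x \<noteq> 0" using elim S0 by auto
      ultimately have "L x * (1 - G0 x) - G0 x = 0" by simp
      then show "G0 x * (1 + L x) = L x" by (simp add: algebra_simps)
    qed
  qed
  have G0MW: "G0 \<in> borel_measurable MW" using FmMW[OF u0 G0F] .
  interpret MWs: finite_measure_subalgebra M MW
    by (intro finite_measure_subalgebra.intro finite_measure_subalgebra_axioms.intro M.finite_measure_axioms subMW)
  have charact: "AE x in M. real_cond_exp M MW N1 x = G0 x"
  proof (rule MWs.real_cond_exp_charact)
    fix A assume A: "A \<in> sets MW"
    have indMW: "(\<lambda>x. indicator A x :: real) \<in> borel_measurable MW" using A by simp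
    have indM[measurable]: "(\<lambda>x. indicator A x :: real) \<in> borel_measurable M" using MWM[OF indMW] .
    have indG0MW: "(\<lambda>x. indicator A x * G0 x :: real) \<in> borel_measurable MW" using indMW G0MW by measurable
    have indb: "\<And>x. \<bar>indicator A x :: real\<bar> \<le> 1" by (simp add: indicator_def)
    have indG0b: "\<And>x. \<bar>indicator A x * G0 x :: real\<bar> \<le> 1" using G001 by (intro helpM indb) (auto simp: abs_le_iff)
    have R1: "integrable M (\<lambda>x. N0 x * L x * indicator A x) \<and> (\<integral>x. N1 x * indicator A x \<partial>M) = (\<integral>x. N0 x * L x * indicator A x \<partial>M)"
      by (rule Rint[OF indMW indb])
    have R2: "integrable M (\<lambda>x. N0 x * L x * (indicator A x * G0 x)) \<and> (\<integral>x. N1 x * (indicator A x * G0 x) \<partial>M) = (\<integral>x. N0 x * L x * (indicator A x * G0 x) \<partial>M)"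
      by (rule Rint[OF indG0MW indG0b])
    have i1: "integrable M (\<lambda>x. N1 x * (indicator A x * G0 x))" by (rule bint[of _ 1]) (auto intro: helpM N1ab indG0b)
    have i2: "integrable M (\<lambda>x. N0 x * (indicator A x * G0 x))" by (rule bint[of _ 1]) (auto intro: helpM N0ab indG0b)
    have "(\<integral>x. indicator A x * G0 x \<partial>M) = (\<integral>x. N1 x * (indicator A x * G0 x) + N0 x * (indicator A x * G0 x) \<partial>M)"
      by (intro Bochner_Integration.integral_cong refl) (auto simp: N01 algebra_simps)
    also have "\<dots> = (\<integral>x. N1 x * (indicator A x * G0 x) \<partial>M) + (\<integral>x. N0 x * (indicator A x * G0 x) \<partial>M)"
      using i1 i2 by simp
    also have "\<dots> = (\<integral>x. N0 x * L x * (indicator A x * G0 x) \<partial>M) + (\<integral>x. N0 x * (indicator A x * G0 x) \<partial>M)"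
      using R2 by simp
    also have "\<dots> = (\<integral>x. N0 x * L x * (indicator A x * G0 x) + N0 x * (indicator A x * G0 x) \<partial>M)"
      using R2 i2 by simp
    also have "\<dots> = (\<integral>x. N0 x * L x * indicator A x \<partial>M)"
    proof (intro integral_cong_AE)
      show "AE x in M. N0 x * L x * (indicator A x * G0 x) + N0 x * (indicator A x * G0 x) = N0 x * L x * indicator A x"
        using ZF
      proof eventually_elim
        case (elim x)
        show ?case
        proof (cases "S x = 0")
          case True
          then have h: "G0 x * (1 + L x) = L x" using elim by auto
          have "N0 x * L x * (indicator A x * G0 x) + N0 x * (indicator A x * G0 x) = indicator A x * (G0 x * (1 + L x))"
            using True by (simp add: N0_def algebra_simps)
          also have "\<dots> = N0 x * L x * indicator A x" using True h by (simp add: N0_def)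
          finally show ?thesis .
        next
          case False then show ?thesis by (simp add: N0_def)
        qed
      qed
    qed auto
    also have "\<dots> = (\<integral>x. N1 x * indicator A x \<partial>M)" using R1 by simp
    finally show "(\<integral>x\<in>A. N1 x \<partial>M) = (\<integral>x\<in>A. G0 x \<partial>M)"
      unfolding set_lebesgue_integral_def by (simp add: mult.commute)
  next
    show "integrable M N1" by (rule N1int)
    show "integrable M G0" by (rule bint[of _ 1]) (use G001 in auto)
    show "G0 \<in> borel_measurable MW" by (rule G0MW)
  qed
  have peq: "posterior M (sigma (space M) (sigma_signals M V W \<mu>0)) S = real_cond_exp M MW N1"
    unfolding posterior_def MW_def N1_def ..
  show ?thesis unfolding peq using charact XG0 by eventually_elim simp
qed

end
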